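(* Let $\alpha,\beta\in\mathbb{C}$ with $\Re(\alpha)>-1$ and $\Re(\beta)>-1$, and let $n\geq 1$ be an integer. Then for all $w\in\mathbb{C}$ with $|w|<1$ and $w\notin(-1,0]$, $$\sqrt{w}\,\frac{\partial }{\partial w} P_{n}^{(\alpha ,\beta )} (1,w)+\frac{1+\alpha +\beta +n}{4}\, P_{n-1}^{(1+\alpha ,1+\beta )} (1,w)=0 .$$
   Context: For $\lambda\in\mathbb{C}$ and an integer $m\ge 0$, $(\lambda)_m$ denotes the Pochhammer symbol: $(\lambda)_0=1$ and $(\lambda)_m=\lambda(\lambda+1)\cdots(\lambda+m-1)$ for $m\ge1$. $\sqrt{w}$ denotes the principal branch of the square root. For $\alpha,\beta\in\mathbb{C}$ with $\Re(\alpha)>-1$, $\Re(\beta)>-1$ and an integer $n\ge 0$, set $$P_{n}^{(\alpha ,\beta )} (1,w)=\sum _{k=0}^{n} \frac{(1+\alpha)_{n}\, (1+\alpha +\beta)_{n+k}}{k!\,(n-k)!\,(1+\alpha)_{k}\, (1+\alpha +\beta)_{n} } \left(\frac{1-\sqrt{w} }{2} \right)^{k},$$ where the quotient $(1+\alpha+\beta)_{n+k}/(1+\alpha+\beta)_n$ is understood as $(1+\alpha+\beta+n)_k$. The symbol $P_{n-1}^{(1+\alpha ,1+\beta )}(1,w)$ denotes the same polynomial with parameters $\alpha,\beta$ replaced by $1+\alpha,1+\beta$ and degree index $n-1$. *)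

theory Defs
  imports "HOL-Analysis.Analysis"
begin

text \<open>The polynomial P_n^(alpha,beta)(1,w) of the paper, with the principal square root csqrt.
  The quotient (1+alpha+beta)_(n+k)/(1+alpha+beta)_n is (1+alpha+beta+n)_k.\<close>
definition jacP :: "nat \<Rightarrow> complex \<Rightarrow> complex \<Rightarrow> complex \<Rightarrow> complex" where
  "jacP n \<alpha> \<beta> w =
     (\<Sum>k=0..n. pochhammer (1 + \<alpha>) n * pochhammer (1 + \<alpha> + \<beta> + of_nat n) k
        / (of_nat (fact k) * of_nat (fact (n - k)) * pochhammer (1 + \<alpha>) k)
        * ((1 - csqrt w) / 2) ^ k)"

end

theory Submission imports Defs begin

lemma abs_id:
  fixes A P Q c F G R s :: complex
  assumes "A \<noteq> 0" "s \<noteq> 0"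
  shows "s * (A * P * (c * Q) / (s * F * G * (A * R))) = c * (P * Q / (F * G * R))"
  using assms by (simp add: field_simps)

lemma cong_aux: "(q::complex) \<noteq> 0 \<Longrightarrow> q * (c * (k * ((- inverse (2 * q) / 2) * t))) = -(1/4) * (k * c * t)"
  by (simp add: field_simps)

lemma aux2: "(x::complex) * y = c * q \<Longrightarrow> -(1/4) * (x * y * t) = - (c / 4 * (q * t))"
proof -
  assume h: "x * y = c * q"
  have "-(1/4) * (x * y * t) = -((x*y) * t / 4)" by simp
  also have "... = - (c / 4 * (q * t))" unfolding h by simp
  finally show ?thesis .
qed

lemma term_id:
  fixes \<alpha> \<beta> :: complex and m j :: nat
  assumes a0: "1 + \<alpha> \<noteq> 0"
  shows "of_nat (Suc j) * (pochhammer (1 + \<alpha>) (Suc m) * pochhammer (1 + \<alpha> + \<beta> + of_nat (Suc m)) (Suc j)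
        / (of_nat (fact (Suc j)) * of_nat (fact (Suc m - Suc j)) * pochhammer (1 + \<alpha>) (Suc j)))
     = (1 + \<alpha> + \<beta> + of_nat (Suc m)) * (pochhammer (1 + (1 + \<alpha>)) m * pochhammer (1 + (1 + \<alpha>) + (1 + \<beta>) + of_nat m) j
        / (of_nat (fact j) * of_nat (fact (m - j)) * pochhammer (1 + (1 + \<alpha>)) j))"
proof -
  have e1: "1 + \<alpha> + \<beta> + of_nat (Suc m) + 1 = 1 + (1 + \<alpha>) + (1 + \<beta>) + of_nat m" by (simp add: algebra_simps)
  have e2: "1 + \<alpha> + 1 = 1 + (1 + \<alpha>)" by simp
  have f: "(of_nat (fact (Suc j)) :: complex) = of_nat (Suc j) * of_nat (fact j)"
    by (simp add: fact_Suc algebra_simps)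
  show ?thesis
    unfolding pochhammer_rec e1 e2 f diff_Suc_Suc
    by (rule abs_id[OF a0], rule of_nat_neq_0)
qed

lemma jac_deriv:
  fixes \<alpha> \<beta> w :: complex and n :: nat
  assumes "w \<notin> \<real>\<^sub>\<le>\<^sub>0"
  shows "((\<lambda>z. jacP n \<alpha> \<beta> z) has_field_derivative
    (\<Sum>k=0..n. pochhammer (1 + \<alpha>) n * pochhammer (1 + \<alpha> + \<beta> + of_nat n) k
        / (of_nat (fact k) * of_nat (fact (n - k)) * pochhammer (1 + \<alpha>) k)
        * (of_nat k * ((- inverse (2 * csqrt w) / 2) * ((1 - csqrt w) / 2) ^ (k - Suc 0))))) (at w)"
proof -
  have h0: "((\<lambda>z. (1 - csqrt z) / 2) has_field_derivative ((0 - inverse (2 * csqrt w)) / 2)) (at w)"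
    by (intro DERIV_cdivide DERIV_diff DERIV_const has_field_derivative_csqrt assms)
  have h: "((\<lambda>z. (1 - csqrt z) / 2) has_field_derivative (- inverse (2 * csqrt w) / 2)) (at w)"
    using h0 by simp
  show ?thesis
    unfolding jacP_def
    by (intro DERIV_sum DERIV_cmult DERIV_power[where f="\<lambda>z. (1 - csqrt z) / 2"] h)
qed
theorem mainTheorem3:
  fixes \<alpha> \<beta> w :: complex and n :: nat
  assumes "Re \<alpha> > -1" and "Re \<beta> > -1" and "n \<ge> 1"
    and "norm w < 1" and "w \<notin> complex_of_real ` {-1<..0}"
  shows "csqrt w * deriv (\<lambda>z. jacP n \<alpha> \<beta> z) w
           + (1 + \<alpha> + \<beta> + of_nat n) / 4 * jacP (n - 1) (1 + \<alpha>) (1 + \<beta>) w = 0"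
proof -
  have wn: "w \<notin> \<real>\<^sub>\<le>\<^sub>0"
  proof
    assume "w \<in> \<real>\<^sub>\<le>\<^sub>0"
    then obtain r where r: "w = complex_of_real r" "r \<le> 0" by (auto elim!: nonpos_Reals_cases)
    with assms(4) have "r > -1" by simp
    with r assms(5) show False by auto
  qed
  have w0: "w \<noteq> 0" using assms(5) by force
  hence sq0: "csqrt w \<noteq> 0" by simp
  have a0: "1 + \<alpha> \<noteq> 0"
  proof
    assume "1 + \<alpha> = 0"
    hence "Re (1 + \<alpha>) = 0" by simp
    with assms(1) show False by simp
  qed
  obtain m where n: "n = Suc m" using assms(3) by (cases n) auto
  define s where "s = (1 - csqrt w) / 2"
  define C where "C = (\<lambda>k. pochhammer (1 + \<alpha>) n * pochhammer (1 + \<alpha> + \<beta> + of_nat n) k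
        / (of_nat (fact k) * of_nat (fact (n - k)) * pochhammer (1 + \<alpha>) k))"
  have D: "deriv (\<lambda>z. jacP n \<alpha> \<beta> z) w = (\<Sum>k=0..n. C k * (of_nat k * ((- inverse (2 * csqrt w) / 2) * s ^ (k - Suc 0))))"
    unfolding C_def s_def by (rule DERIV_imp_deriv[OF jac_deriv[OF wn]])
  have "csqrt w * deriv (\<lambda>z. jacP n \<alpha> \<beta> z) w = (\<Sum>k=0..n. -(1/4) * (of_nat k * C k * s ^ (k - Suc 0)))"
    unfolding D sum_distrib_left
    proof (rule sum.cong[OF refl])
      fix k
      show "csqrt w * (C k * (of_nat k * ((- inverse (2 * csqrt w) / 2) * s ^ (k - Suc 0)))) = -(1/4) * (of_nat k * C k * s ^ (k - Suc 0))"
        by (rule cong_aux[OF sq0])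
    qed
  also have "\<dots> = (\<Sum>j=0..m. -(1/4) * (of_nat (Suc j) * C (Suc j) * s ^ j))"
    unfolding n by (subst sum.atLeast0_atMost_Suc_shift) simp
  also have "\<dots> = - ((1 + \<alpha> + \<beta> + of_nat n) / 4 * jacP (n - 1) (1 + \<alpha>) (1 + \<beta>) w)"
    unfolding jacP_def n diff_Suc_1 sum_distrib_left s_def[symmetric] sum_negf[symmetric]
  proof (rule sum.cong[OF refl])
    fix j assume "j \<in> {0..m}"
    show "-(1/4) * (of_nat (Suc j) * C (Suc j) * s ^ j) = - ((1 + \<alpha> + \<beta> + of_nat (Suc m)) / 4 * (pochhammer (1 + (1 + \<alpha>)) m * pochhammer (1 + (1 + \<alpha>) + (1 + \<beta>) + of_nat m) j
        / (of_nat (fact j) * of_nat (fact (m - j)) * pochhammer (1 + (1 + \<alpha>)) j) * s ^ j))"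
      unfolding C_def n by (rule aux2[OF term_id[OF a0]])
  qed
  finally have eq: "csqrt w * deriv (\<lambda>z. jacP n \<alpha> \<beta> z) w = - ((1 + \<alpha> + \<beta> + of_nat n) / 4 * jacP (n - 1) (1 + \<alpha>) (1 + \<beta>) w)" .
  show ?thesis using eq by (simp only: eq_neg_iff_add_eq_0)
qed
end
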